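(* Let $m$ be a real parameter and let $D:[0,\infty)\times\mathbb N\to\mathbb R$ be functions such that, with the operators $\mathcal K^\alpha$ acting on the variable $z$, $\mathcal K^+_lD(z,n)=(\tfrac m2+n)D(z,n+1)$ and $\mathcal K^0_lD(z,n)=(n+\tfrac m4)D(z,n)$ for all $n\in\mathbb N$, and $\mathcal K^-_lD(z,0)=0$. Then $\mathcal K^\alpha\rightarrow^DK^\alpha$ for each $\alpha\in\{+,-,0\}$.
   Context: $\mathbb N=\{0,1,2,\dots\}$. On smooth functions $f:[0,\infty)\to\mathbb R$: $\mathcal K^+f(z)=zf(z)$, $\mathcal K^-f(z)=zf''(z)+\frac m2f'(z)$, $\mathcal K^0f(z)=zf'(z)+\frac m4f(z)$. On functions $f:\mathbb N\to\mathbb R$: $K^+f(n)=(\frac m2+n)f(n+1)$, $K^-f(n)=nf(n-1)$, $K^0f(n)=(\frac m4+n)f(n)$. Left/right actions: $(\mathcal K_lD)(z,n)=(\mathcal KD(\cdot,n))(z)$, $(K_rD)(z,n)=(KD(z,\cdot))(n)$; $\mathcal K\rightarrow^DK$ means $\mathcal K_lD=K_rD$. *)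

theory Defs
  imports "HOL-Analysis.Analysis"
begin

definition hd :: "(real \<Rightarrow> real) \<Rightarrow> real \<Rightarrow> real" where
  "hd f z = vector_derivative f (at z within {0..})"

definition smooth_half :: "(real \<Rightarrow> real) \<Rightarrow> bool" where
  "smooth_half f \<longleftrightarrow> (\<forall>k. \<forall>z\<ge>0.
     ((hd ^^ k) f has_vector_derivative (hd ^^ Suc k) f z) (at z within {0..}))"

definition cKp :: "real \<Rightarrow> (real \<Rightarrow> real) \<Rightarrow> real \<Rightarrow> real" where
  "cKp m f z = z * f z"
definition cKm :: "real \<Rightarrow> (real \<Rightarrow> real) \<Rightarrow> real \<Rightarrow> real" where
  "cKm m f z = z * hd (hd f) z + m / 2 * hd f z"
definition cK0 :: "real \<Rightarrow> (real \<Rightarrow> real) \<Rightarrow> real \<Rightarrow> real" where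
  "cK0 m f z = z * hd f z + m / 4 * f z"

definition dKp :: "real \<Rightarrow> (nat \<Rightarrow> real) \<Rightarrow> nat \<Rightarrow> real" where
  "dKp m f n = (m / 2 + real n) * f (n + 1)"
definition dKm :: "real \<Rightarrow> (nat \<Rightarrow> real) \<Rightarrow> nat \<Rightarrow> real" where
  "dKm m f n = real n * f (n - 1)"
definition dK0 :: "real \<Rightarrow> (nat \<Rightarrow> real) \<Rightarrow> nat \<Rightarrow> real" where
  "dK0 m f n = (m / 4 + real n) * f n"

definition act_l :: "((real \<Rightarrow> real) \<Rightarrow> real \<Rightarrow> real) \<Rightarrow> (real \<Rightarrow> nat \<Rightarrow> real) \<Rightarrow> real \<Rightarrow> nat \<Rightarrow> real" where
  "act_l K D z n = K (\<lambda>w. D w n) z"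
definition act_r :: "((nat \<Rightarrow> real) \<Rightarrow> nat \<Rightarrow> real) \<Rightarrow> (real \<Rightarrow> nat \<Rightarrow> real) \<Rightarrow> real \<Rightarrow> nat \<Rightarrow> real" where
  "act_r K D z n = K (D z) n"

definition dual_rel :: "((real \<Rightarrow> real) \<Rightarrow> real \<Rightarrow> real) \<Rightarrow> (real \<Rightarrow> nat \<Rightarrow> real) \<Rightarrow> ((nat \<Rightarrow> real) \<Rightarrow> nat \<Rightarrow> real) \<Rightarrow> bool" where
  "dual_rel Kc D Kd \<longleftrightarrow> (\<forall>z\<ge>0. \<forall>n. act_l Kc D z n = act_r Kd D z n)"

end

theory Submission
  imports Defs
begin

lemma nb: "(z::real) \<ge> 0 \<Longrightarrow> at z within {0..} \<noteq> bot"
proof -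
  assume z: "z \<ge> 0"
  have "z islimpt {0..}"
    unfolding islimpt_approachable
  proof (intro allI impI)
    fix e :: real assume "e > 0"
    thus "\<exists>x'\<in>{0..}. x' \<noteq> z \<and> dist x' z < e"
      by (intro bexI[of _ "z + e/2"]) (use z in \<open>auto simp: dist_real_def\<close>)
  qed
  thus ?thesis using trivial_limit_within by blast
qed

lemma uniq:
  fixes f g :: "real \<Rightarrow> real"
  assumes "z \<ge> 0" "(f has_real_derivative a) (at z within {0..})"
    "(g has_real_derivative b) (at z within {0..})" "\<And>w. w \<ge> 0 \<Longrightarrow> f w = g w"
  shows "a = b"
proof -
  have "(f has_vector_derivative b) (at z within {0..})"
    using has_vector_derivative_transform[of z "{0..}" f g b] assms
    by (auto simp: has_real_derivative_iff_has_vector_derivative)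
  thus ?thesis using vector_derivative_unique_within[OF nb[OF assms(1)]] assms(2)
    by (auto simp: has_real_derivative_iff_has_vector_derivative)
qed

theorem proposition5p1:
  fixes m :: real and D :: "real \<Rightarrow> nat \<Rightarrow> real"
  assumes smooth: "\<And>n. smooth_half (\<lambda>z. D z n)"
    and hp: "\<And>z n. z \<ge> 0 \<Longrightarrow> act_l (cKp m) D z n = (m / 2 + real n) * D z (n + 1)"
    and h0: "\<And>z n. z \<ge> 0 \<Longrightarrow> act_l (cK0 m) D z n = (real n + m / 4) * D z n"
    and hm: "\<And>z. z \<ge> 0 \<Longrightarrow> act_l (cKm m) D z 0 = 0"
  shows "dual_rel (cKp m) D (dKp m) \<and> dual_rel (cKm m) D (dKm m) \<and> dual_rel (cK0 m) D (dK0 m)"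
proof -
  define d where "d n = (\<lambda>z. D z n)" for n
  define d1 where "d1 n = hd (d n)" for n
  define d2 where "d2 n = hd (d1 n)" for n
  have D1: "((d n) has_real_derivative d1 n z) (at z within {0..})" if "z \<ge> 0" for n z
    using smooth[of n] that unfolding smooth_half_def d1_def d_def
    by (auto simp: has_real_derivative_iff_has_vector_derivative dest: spec[of _ 0])
  have D2: "((d1 n) has_real_derivative d2 n z) (at z within {0..})" if "z \<ge> 0" for n z
    using smooth[of n] that unfolding smooth_half_def d2_def d1_def d_def
    by (auto simp: has_real_derivative_iff_has_vector_derivative dest: spec[of _ 1])
  have E0: "w * d1 n w = real n * d n w" if "w \<ge> 0" for n w
    using h0[OF that, of n] unfolding act_l_def cK0_def d1_def d_def by (simp add: algebra_simps)
  have Ep: "w * d n w = (m / 2 + real n) * d (n+1) w" if "w \<ge> 0" for n w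
    using hp[OF that, of n] unfolding act_l_def cKp_def d_def by simp
  have F0: "d1 n z + z * d2 n z = real n * d1 n z" if "z \<ge> 0" for n z
  proof (rule uniq[OF that])
    show "((\<lambda>w. w * d1 n w) has_real_derivative d1 n z + z * d2 n z) (at z within {0..})"
      using DERIV_mult[OF DERIV_ident D2[OF that, of n]] by (simp add: mult.commute)
    show "((\<lambda>w. real n * d n w) has_real_derivative real n * d1 n z) (at z within {0..})"
      using DERIV_cmult[OF D1[OF that, of n]] by (simp add: mult.commute)
  qed (use E0 in auto)
  have Fp: "d n z + z * d1 n z = (m / 2 + real n) * d1 (n+1) z" if "z \<ge> 0" for n z
  proof (rule uniq[OF that])
    show "((\<lambda>w. w * d n w) has_real_derivative d n z + z * d1 n z) (at z within {0..})"
      using DERIV_mult[OF DERIV_ident D1[OF that, of n]] by (simp add: mult.commute)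
    show "((\<lambda>w. (m / 2 + real n) * d (n+1) w) has_real_derivative (m / 2 + real n) * d1 (n+1) z) (at z within {0..})"
      using DERIV_cmult[OF D1[OF that, of "n+1"]] by simp
  qed (use Ep in auto)
  have M: "act_l (cKm m) D z n = dKm m (D z) n" if "z \<ge> 0" for z n
  proof (cases n)
    case 0 thus ?thesis using hm[OF that] by (simp add: dKm_def)
  next
    case (Suc k)
    have a: "z * d2 n z = real k * d1 n z" using F0[OF that, of n] Suc by (simp add: algebra_simps)
    have b: "real (Suc k) * d k z = (m / 2 + real k) * d1 n z"
      using Fp[OF that, of k] E0[OF that, of k] Suc by (simp add: algebra_simps)
    have "act_l (cKm m) D z n = z * d2 n z + m / 2 * d1 n z"
      unfolding act_l_def cKm_def d2_def d1_def d_def by simp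
    also have "\<dots> = (m / 2 + real k) * d1 n z" using a by (simp add: algebra_simps)
    also have "\<dots> = real n * D z (n - 1)" using b Suc by (simp add: d_def)
    finally show ?thesis by (simp add: dKm_def)
  qed
  show ?thesis
    unfolding dual_rel_def
    using hp h0 M by (auto simp: act_r_def dKp_def dK0_def algebra_simps)
qed

end
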